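(* Let $S=\langle P,\varphi\rangle$ be a SUT model, $t$ a strength, $N\ge1$ an integer and $lb$ an integer with $0\le lb<CAN(t,S)$. If $N\ge CAN(t,S)$, then the optimal cost of the Partial MaxSAT instance $PMSat_{CCX}^{N,t,S,lb}$ (defined in the context) is $CAN(t,S)-(lb+1)$; otherwise it is $\infty$.
   Context: A SUT model is $S=\langle P,\varphi\rangle$, where $P$ is a finite set of parameters, each $p\in P$ having a finite nonempty domain $d(p)$, and $\varphi$ is a propositional formula whose atoms have the form $(p=v)$ with $p\in P$, $v\in d(p)$. A test case is a full assignment $A$ giving each $p$ a value in $d(p)$ such that $\varphi$ is true when each atom $(p=v)$ is read as true iff $A(p)=v$; it is assumed that at least one test case exists. Fix a strength $t$ with $1\le t\le|P|$. A $t$-tuple is an assignment of values to exactly $t$ distinct parameters, viewed as a set of pairs $(p,v)$; a test case covers $\tau$ if it assigns $v$ to $p$ for every $(p,v)\in\tau$. A $t$-tuple is allowed if some test case covers it; $\mathcal T_a$ is the set of allowed $t$-tuples. A covering array $CA(N;t,S)$ is a list of $N$ test cases (repetitions allowed) covering every allowed $t$-tuple; $CAN(t,S)$ is the minimum $N$ for which a $CA(N;t,S)$ exists. $[N]=\{1,\dots,N\}$. A (weighted) Partial MaxSAT instance consists of hard constraints and soft clauses $(c,w)$ with positive integer weight $w$; its optimal cost is the minimum, over truth assignments satisfying all hard constraints, of the total weight of falsified soft clauses, and $\infty$ if the hard constraints are unsatisfiable. Variables: $x_{i,p,v}$ ($i\in[N]$, $p\in P$, $v\in d(p)$), $c^i_\tau$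 ($i\in\{0,\dots,N\}$, $\tau\in\mathcal T_a$), $u_i$ ($i\in\{lb+2,\dots,N\}$). Hard constraints of $PMSat_{CCX}^{N,t,S,lb}$: (X) for every $i\in[N]$, $p\in P$: exactly one of $\{x_{i,p,v}:v\in d(p)\}$ is true; (SUTX) for every $i\in[N]$: the formula obtained from $\varphi$ by replacing each atom $(p=v)$ with $x_{i,p,v}$; (CCX) (a) for every $i\in[N]$, $\tau\in\mathcal T_a$, $(p,v)\in\tau$: $c^i_\tau\rightarrow(c^{i-1}_\tau\vee x_{i,p,v})$; (b) for every $\tau\in\mathcal T_a$: the unit clause $c^N_\tau$; (c) for every $\tau\in\mathcal T_a$: $c^N_\tau\rightarrow\neg c^0_\tau$; (BSU) for every $i\in\{lb+2,\dots,N-1\}$: $u_{i+1}\rightarrow u_i$; (CCU) for every $i\in\{lb+2,\dots,N\}$, $\tau\in\mathcal T_a$: $\neg c^{i-1}_\tau\rightarrow u_i$. Soft clauses: $(\neg u_i,1)$ for every $i\in\{lb+2,\dots,N\}$. *)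

theory Defs
  imports Main "HOL-Library.Extended_Nat" "HOL-Library.FuncSet"
begin

datatype 'a pform =
    Atom 'a
  | TT
  | FF
  | Neg "'a pform"
  | And "'a pform" "'a pform"
  | Or "'a pform" "'a pform"
  | Imp "'a pform" "'a pform"

primrec peval :: "('a \<Rightarrow> bool) \<Rightarrow> 'a pform \<Rightarrow> bool" where
  "peval I (Atom a) = I a"
| "peval I TT = True"
| "peval I FF = False"
| "peval I (Neg f) = (\<not> peval I f)"
| "peval I (And f g) = (peval I f \<and> peval I g)"
| "peval I (Or f g) = (peval I f \<or> peval I g)"
| "peval I (Imp f g) = (peval I f \<longrightarrow> peval I g)"

primrec atoms :: "'a pform \<Rightarrow> 'a set" where
  "atoms (Atom a) = {a}"
| "atoms TT = {}"
| "atoms FF = {}"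
| "atoms (Neg f) = atoms f"
| "atoms (And f g) = atoms f \<union> atoms g"
| "atoms (Or f g) = atoms f \<union> atoms g"
| "atoms (Imp f g) = atoms f \<union> atoms g"

definition list_of_set :: "'a set \<Rightarrow> 'a list" where
  "list_of_set S = (SOME xs. set xs = S \<and> distinct xs)"

definition exactly_one :: "'a set \<Rightarrow> 'a pform" where
  "exactly_one S =
     And (foldr (\<lambda>a f. Or (Atom a) f) (list_of_set S) FF)
         (foldr (\<lambda>(a, b) f. And (Neg (And (Atom a) (Atom b))) f)
                (list_of_set {(a, b). a \<in> S \<and> b \<in> S \<and> a \<noteq> b}) TT)"

text \<open>A SUT model is given by a parameter set P, domains d, and a constraint formula
  phi whose atoms are pairs (p, v) standing for (p = v).\<close>
definition sut_model :: "'p set \<Rightarrow> ('p \<Rightarrow> 'v set) \<Rightarrow> ('p \<times> 'v) pform \<Rightarrow> bool" where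
  "sut_model P d phi \<longleftrightarrow> finite P \<and> (\<forall>p\<in>P. finite (d p) \<and> d p \<noteq> {})
      \<and> atoms phi \<subseteq> Sigma P d"

definition test_case :: "'p set \<Rightarrow> ('p \<Rightarrow> 'v set) \<Rightarrow> ('p \<times> 'v) pform \<Rightarrow> ('p \<Rightarrow> 'v) \<Rightarrow> bool" where
  "test_case P d phi A \<longleftrightarrow> A \<in> PiE P d \<and> peval (\<lambda>(p, v). A p = v) phi"

definition t_tuple :: "'p set \<Rightarrow> ('p \<Rightarrow> 'v set) \<Rightarrow> nat \<Rightarrow> ('p \<times> 'v) set \<Rightarrow> bool" where
  "t_tuple P d t \<tau> \<longleftrightarrow> finite \<tau> \<and> \<tau> \<subseteq> Sigma P d \<and> inj_on fst \<tau> \<and> card \<tau> = t"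

definition covers :: "('p \<Rightarrow> 'v) \<Rightarrow> ('p \<times> 'v) set \<Rightarrow> bool" where
  "covers A \<tau> \<longleftrightarrow> (\<forall>(p, v)\<in>\<tau>. A p = v)"

definition allowed_tuples :: "'p set \<Rightarrow> ('p \<Rightarrow> 'v set) \<Rightarrow> ('p \<times> 'v) pform \<Rightarrow> nat \<Rightarrow> ('p \<times> 'v) set set" where
  "allowed_tuples P d phi t = {\<tau>. t_tuple P d t \<tau> \<and> (\<exists>A. test_case P d phi A \<and> covers A \<tau>)}"

text \<open>CA(N; t, S): a list of N test cases (repetitions allowed) covering every allowed t-tuple.\<close>
definition is_CA :: "nat \<Rightarrow> nat \<Rightarrow> 'p set \<Rightarrow> ('p \<Rightarrow> 'v set) \<Rightarrow> ('p \<times> 'v) pform \<Rightarrow> ('p \<Rightarrow> 'v) list \<Rightarrow> bool" where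
  "is_CA N t P d phi rows \<longleftrightarrow> length rows = N \<and> (\<forall>A\<in>set rows. test_case P d phi A)
      \<and> (\<forall>\<tau>\<in>allowed_tuples P d phi t. \<exists>A\<in>set rows. covers A \<tau>)"

definition CAN :: "nat \<Rightarrow> 'p set \<Rightarrow> ('p \<Rightarrow> 'v set) \<Rightarrow> ('p \<times> 'v) pform \<Rightarrow> nat" where
  "CAN t P d phi = (LEAST N. \<exists>rows. is_CA N t P d phi rows)"

record 'x pmsat =
  hard :: "'x pform set"
  soft :: "('x pform \<times> nat) list"

definition pmsat_cost :: "'x pmsat \<Rightarrow> ('x \<Rightarrow> bool) \<Rightarrow> nat" where
  "pmsat_cost I \<alpha> = sum_list (map snd (filter (\<lambda>(c, w). \<not> peval \<alpha> c) (soft I)))"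

text \<open>Optimal cost; the infimum of the empty set in enat is \<infinity> (unsatisfiable hard part).\<close>
definition opt_cost :: "'x pmsat \<Rightarrow> enat" where
  "opt_cost I = Inf {enat (pmsat_cost I \<alpha>) | \<alpha>. \<forall>h\<in>hard I. peval \<alpha> h}"

datatype ('p, 'v) var = X nat 'p 'v | C nat "('p \<times> 'v) set" | U nat

definition ccx_hard :: "nat \<Rightarrow> nat \<Rightarrow> 'p set \<Rightarrow> ('p \<Rightarrow> 'v set) \<Rightarrow> ('p \<times> 'v) pform \<Rightarrow> nat
    \<Rightarrow> ('p, 'v) var pform set" where
  "ccx_hard N t P d phi lb =
     \<comment> \<open>(X)\<close>
     {exactly_one {X i p v | v. v \<in> d p} | i p. i \<in> {1..N} \<and> p \<in> P}
   \<union> \<comment> \<open>(SUTX)\<close>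
     {map_pform (\<lambda>(p, v). X i p v) phi | i. i \<in> {1..N}}
   \<union> \<comment> \<open>(CCX a)\<close>
     {Imp (Atom (C i \<tau>)) (Or (Atom (C (i - 1) \<tau>)) (Atom (X i p v))) | i \<tau> p v.
        i \<in> {1..N} \<and> \<tau> \<in> allowed_tuples P d phi t \<and> (p, v) \<in> \<tau>}
   \<union> \<comment> \<open>(CCX b)\<close>
     {Atom (C N \<tau>) | \<tau>. \<tau> \<in> allowed_tuples P d phi t}
   \<union> \<comment> \<open>(CCX c)\<close>
     {Imp (Atom (C N \<tau>)) (Neg (Atom (C 0 \<tau>))) | \<tau>. \<tau> \<in> allowed_tuples P d phi t}
   \<union> \<comment> \<open>(BSU)\<close>
     {Imp (Atom (U (i + 1))) (Atom (U i)) | i. lb + 2 \<le> i \<and> i \<le> N - 1}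
   \<union> \<comment> \<open>(CCU)\<close>
     {Imp (Neg (Atom (C (i - 1) \<tau>))) (Atom (U i)) | i \<tau>.
        lb + 2 \<le> i \<and> i \<le> N \<and> \<tau> \<in> allowed_tuples P d phi t}"

definition ccx_soft :: "nat \<Rightarrow> nat \<Rightarrow> (('p, 'v) var pform \<times> nat) list" where
  "ccx_soft N lb = map (\<lambda>i. (Neg (Atom (U i)), 1)) [lb + 2 ..< N + 1]"

definition PMSat_CCX :: "nat \<Rightarrow> nat \<Rightarrow> 'p set \<Rightarrow> ('p \<Rightarrow> 'v set) \<Rightarrow> ('p \<times> 'v) pform \<Rightarrow> nat
    \<Rightarrow> ('p, 'v) var pmsat" where
  "PMSat_CCX N t P d phi lb = \<lparr>hard = ccx_hard N t P d phi lb, soft = ccx_soft N lb\<rparr>"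

end

theory Submission
  imports Defs
begin

lemma peval_map: "peval \<alpha> (map_pform g f) = peval (\<alpha> \<circ> g) f"
  by (induction f) auto

lemma peval_cong: "(\<And>a. a \<in> atoms f \<Longrightarrow> I a = J a) \<Longrightarrow> peval I f = peval J f"
  by (induction f) auto

lemma list_of_set: "finite S \<Longrightarrow> set (list_of_set S) = S \<and> distinct (list_of_set S)"
  unfolding list_of_set_def by (rule someI_ex) (rule finite_distinct_list)

lemma foldr_or: "peval \<alpha> (foldr (\<lambda>a f. Or (Atom a) f) xs FF) \<longleftrightarrow> (\<exists>a\<in>set xs. \<alpha> a)"
  by (induction xs) auto

lemma foldr_and: "peval \<alpha> (foldr (\<lambda>(a, b) f. And (Neg (And (Atom a) (Atom b))) f) ys TT)
   \<longleftrightarrow> (\<forall>(a, b)\<in>set ys. \<not> (\<alpha> a \<and> \<alpha> b))"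
  by (induction ys) auto

lemma exactly_one_sem:
  assumes "finite S"
  shows "peval \<alpha> (exactly_one S) \<longleftrightarrow> (\<exists>!a. a \<in> S \<and> \<alpha> a)"
proof -
  have f2: "finite {(a, b). a \<in> S \<and> b \<in> S \<and> a \<noteq> b}"
    by (rule finite_subset[of _ "S \<times> S"]) (use assms in auto)
  show ?thesis
    unfolding exactly_one_def using list_of_set[OF assms] list_of_set[OF f2]
    by (auto simp: foldr_or foldr_and)
qed

lemma cost_list: "sum_list (map snd (filter (\<lambda>(c, w). \<not> peval \<alpha> c)
    (map (\<lambda>i. (Neg (Atom (U i)), 1)) xs))) = length (filter (\<lambda>i. \<alpha> (U i)) xs)"
  by (induction xs) auto

lemma cost_eq: "pmsat_cost (PMSat_CCX N t P d phi lb) \<alpha> = card {i \<in> {lb+2..N}. \<alpha> (U i)}"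
proof -
  have "pmsat_cost (PMSat_CCX N t P d phi lb) \<alpha> = length (filter (\<lambda>i. \<alpha> (U i)) [lb + 2 ..< N + 1])"
    unfolding pmsat_cost_def PMSat_CCX_def ccx_soft_def pmsat.select_convs by (rule cost_list)
  also have "\<dots> = card {i \<in> {lb+2..N}. \<alpha> (U i)}"
    by (subst distinct_length_filter) (auto intro!: arg_cong[where f=card])
  finally show ?thesis .
qed

lemma lower_CA:
  fixes P :: "'p set" and d :: "'p \<Rightarrow> 'v set" and phi :: "('p \<times> 'v) pform"
  assumes S: "sut_model P d phi"
    and sat: "\<forall>h\<in>ccx_hard N t P d phi lb. peval \<alpha> h"
    and j: "j \<le> N"
    and cov: "\<forall>\<tau>\<in>allowed_tuples P d phi t. \<alpha> (C j \<tau>)"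
  shows "CAN t P d phi \<le> j"
proof -
  let ?T = "allowed_tuples P d phi t"
  have finS: "\<And>p. p \<in> P \<Longrightarrow> finite (d p)" using S unfolding sut_model_def by auto
  have Xu: "\<exists>!v. v \<in> d p \<and> \<alpha> (X i p v)" if "i \<in> {1..N}" "p \<in> P" for i p
  proof -
    have "exactly_one {X i p v | v. v \<in> d p} \<in> ccx_hard N t P d phi lb"
      unfolding ccx_hard_def using that by blast
    then have "peval \<alpha> (exactly_one {X i p v | v. v \<in> d p})" using sat by blast
    moreover have "finite {X i p v | v. v \<in> d p}"
      using finS[OF that(2)] by (simp add: setcompr_eq_image)
    ultimately have "\<exists>!a. a \<in> {X i p v | v. v \<in> d p} \<and> \<alpha> a"
      by (simp add: exactly_one_sem)
    then show ?thesis by auto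
  qed
  have sutx: "peval \<alpha> (map_pform (\<lambda>(p, v). X i p v) phi)" if "i \<in> {1..N}" for i
  proof -
    have "map_pform (\<lambda>(p, v). X i p v) phi \<in> ccx_hard N t P d phi lb"
      unfolding ccx_hard_def using that by blast
    then show ?thesis using sat by blast
  qed
  have cca: "\<alpha> (C i \<tau>) \<longrightarrow> \<alpha> (C (i - 1) \<tau>) \<or> \<alpha> (X i p v)"
    if "i \<in> {1..N}" "\<tau> \<in> ?T" "(p, v) \<in> \<tau>" for i \<tau> p v
  proof -
    have "Imp (Atom (C i \<tau>)) (Or (Atom (C (i - 1) \<tau>)) (Atom (X i p v))) \<in> ccx_hard N t P d phi lb"
      unfolding ccx_hard_def using that by blast
    then show ?thesis using sat by fastforce
  qed
  have c0: "\<not> \<alpha> (C 0 \<tau>)" if "\<tau> \<in> ?T" for \<tau>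
  proof -
    have h1: "Atom (C N \<tau>) \<in> ccx_hard N t P d phi lb"
      unfolding ccx_hard_def using that by blast
    have h2: "Imp (Atom (C N \<tau>)) (Neg (Atom (C 0 \<tau>))) \<in> ccx_hard N t P d phi lb"
      unfolding ccx_hard_def using that by blast
    show ?thesis using bspec[OF sat h1] bspec[OF sat h2] by simp
  qed
  define row where "row i = (\<lambda>p. if p \<in> P then THE v. v \<in> d p \<and> \<alpha> (X i p v) else undefined)" for i
  have rowX: "row i p = v \<longleftrightarrow> \<alpha> (X i p v)" if "i \<in> {1..N}" "p \<in> P" "v \<in> d p" for i p v
  proof -
    have "row i p \<in> d p \<and> \<alpha> (X i p (row i p))"
      unfolding row_def using theI'[OF Xu[OF that(1,2)]] that by simp
    then show ?thesis using Xu[OF that(1,2)] that(3) by blast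
  qed
  have rowd: "row i p \<in> d p" if "i \<in> {1..N}" "p \<in> P" for i p
      unfolding row_def using theI'[OF Xu[OF that(1,2)]] that by simp
  have tc: "test_case P d phi (row i)" if "i \<in> {1..N}" for i
  proof -
    have "row i \<in> PiE P d" using rowd[OF that] by (auto simp: row_def)
    moreover have "peval (\<lambda>(p, v). row i p = v) phi"
    proof -
      have "peval (\<lambda>(p, v). row i p = v) phi = peval (\<alpha> \<circ> (\<lambda>(p, v). X i p v)) phi"
        apply (rule peval_cong)
        using S rowX[OF that] unfolding sut_model_def by auto
      then show ?thesis using sutx[OF that] by (simp add: peval_map)
    qed
    ultimately show ?thesis unfolding test_case_def by blast
  qed
  have covi: "\<alpha> (C i \<tau>) \<longrightarrow> (\<exists>r\<in>{1..i}. covers (row r) \<tau>)" if "\<tau> \<in> ?T" "i \<le> N" for i \<tau>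
    using that(2)
  proof (induction i)
    case 0
    then show ?case using c0[OF that(1)] by blast
  next
    case (Suc i)
    show ?case
    proof
      assume a: "\<alpha> (C (Suc i) \<tau>)"
      show "\<exists>r\<in>{1..Suc i}. covers (row r) \<tau>"
      proof (cases "\<alpha> (C i \<tau>)")
        case True
        have "i \<le> N" using Suc.prems by simp
        then obtain r where "r \<in> {1..i}" "covers (row r) \<tau>" using Suc.IH True by blast
        then show ?thesis by (intro bexI[of _ r]) auto
      next
        case False
        have sub: "\<tau> \<subseteq> Sigma P d" using that(1) unfolding allowed_tuples_def t_tuple_def by blast
        have "covers (row (Suc i)) \<tau>" unfolding covers_def
        proof (intro ballI, clarify)
          fix p v assume pv: "(p, v) \<in> \<tau>"
          then have pP: "p \<in> P" and vd: "v \<in> d p" using sub by auto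
          have si: "Suc i \<in> {1..N}" using Suc.prems by simp
          have "\<alpha> (X (Suc i) p v)" using cca[OF si that(1) pv] a False by simp
          then show "row (Suc i) p = v" using rowX[OF si pP vd] by simp
        qed
        then show ?thesis by (intro bexI[of _ "Suc i"]) auto
      qed
    qed
  qed
  define rows where "rows = map row [1..<j+1]"
  have "is_CA j t P d phi rows"
    unfolding is_CA_def
  proof (intro conjI ballI)
    show "length rows = j" by (simp add: rows_def)
    fix A assume "A \<in> set rows"
    then show "test_case P d phi A" using tc j by (auto simp: rows_def)
  next
    fix \<tau> assume "\<tau> \<in> ?T"
    then obtain r where r: "r \<in> {1..j}" "covers (row r) \<tau>" using covi[of \<tau> j] cov j by blast
    have "r \<in> set [1..<j+1]" using r(1) by (simp del: upt_Suc)
    then have "row r \<in> set rows" unfolding rows_def set_map by (rule imageI)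
    then show "\<exists>A\<in>set rows. covers A \<tau>" using r(2) by blast
  qed
  then have "\<exists>rows. is_CA j t P d phi rows" by blast
  then show ?thesis unfolding CAN_def by (rule Least_le)
qed


lemma CA_exists:
  fixes P :: "'p set" and d :: "'p \<Rightarrow> 'v set" and phi :: "('p \<times> 'v) pform"
  assumes S: "sut_model P d phi"
  shows "\<exists>n rows. is_CA n t P d phi rows"
proof -
  let ?T = "allowed_tuples P d phi t"
  have "finite (Sigma P d)" using S unfolding sut_model_def by auto
  moreover have "?T \<subseteq> Pow (Sigma P d)" by (auto simp: allowed_tuples_def t_tuple_def)
  ultimately have finT: "finite ?T" by (metis finite_Pow_iff finite_subset)
  define xs where "xs = list_of_set ?T"
  have xs: "set xs = ?T" using list_of_set[OF finT] xs_def by simp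
  define f where "f \<tau> = (SOME A. test_case P d phi A \<and> covers A \<tau>)" for \<tau>
  have f: "test_case P d phi (f \<tau>) \<and> covers (f \<tau>) \<tau>" if "\<tau> \<in> ?T" for \<tau>
  proof -
    have "\<exists>A. test_case P d phi A \<and> covers A \<tau>" using that by (auto simp: allowed_tuples_def)
    then show ?thesis unfolding f_def by (rule someI_ex)
  qed
  have "is_CA (length xs) t P d phi (map f xs)"
    unfolding is_CA_def using f xs by auto
  then show ?thesis by blast
qed

theorem proposition4:
  fixes P :: "'p set" and d :: "'p \<Rightarrow> 'v set" and phi :: "('p \<times> 'v) pform"
    and t N lb :: nat
  assumes S: "sut_model P d phi"
    and ex_test: "\<exists>A. test_case P d phi A"
    and t: "1 \<le> t" "t \<le> card P"
    and N: "1 \<le> N"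
    and lb: "lb < CAN t P d phi"
  shows "opt_cost (PMSat_CCX N t P d phi lb) =
           (if CAN t P d phi \<le> N then enat (CAN t P d phi - (lb + 1)) else \<infinity>)"
proof -
  let ?T = "allowed_tuples P d phi t"
  let ?K = "CAN t P d phi"
  let ?H = "ccx_hard N t P d phi lb"
  let ?I = "PMSat_CCX N t P d phi lb"
  have hardI: "hard ?I = ?H" by (simp add: PMSat_CCX_def)
  define SS where "SS = {enat (pmsat_cost ?I \<alpha>) | \<alpha>. \<forall>h\<in>hard ?I. peval \<alpha> h}"
  have oc: "opt_cost ?I = Inf SS" unfolding opt_cost_def SS_def ..
  have lower: "?K \<le> N \<and> ?K - (lb + 1) \<le> pmsat_cost ?I \<alpha>" if sat: "\<forall>h\<in>?H. peval \<alpha> h" for \<alpha>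
  proof -
    have KN: "?K \<le> N"
    proof (rule lower_CA[OF S sat order.refl], intro ballI)
      fix \<tau> assume "\<tau> \<in> ?T"
      then have h: "Atom (C N \<tau>) \<in> ?H" unfolding ccx_hard_def by blast
      show "\<alpha> (C N \<tau>)" using bspec[OF sat h] by simp
    qed
    have sub: "{lb+2..?K} \<subseteq> {i \<in> {lb+2..N}. \<alpha> (U i)}"
    proof
      fix i assume i: "i \<in> {lb+2..?K}"
      have "\<alpha> (U i)"
      proof (rule ccontr)
        assume nu: "\<not> \<alpha> (U i)"
        have "?K \<le> i - 1"
        proof (rule lower_CA[OF S sat], goal_cases)
          case 1
          have "i \<le> ?K" using i by simp
          then show ?case using KN by linarith
        next
          case 2 show ?case
          proof
            fix \<tau> assume tT: "\<tau> \<in> ?T"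
            have iN: "i \<le> N" "lb + 2 \<le> i" using i KN by auto
            from tT iN have h: "Imp (Neg (Atom (C (i - 1) \<tau>))) (Atom (U i)) \<in> ?H"
              unfolding ccx_hard_def by blast
            show "\<alpha> (C (i - 1) \<tau>)" using bspec[OF sat h] nu by simp
          qed
        qed
        then show False using i by auto
      qed
      then show "i \<in> {i \<in> {lb+2..N}. \<alpha> (U i)}" using i KN by simp
    qed
    have "card {lb+2..?K} \<le> card {i \<in> {lb+2..N}. \<alpha> (U i)}"
      by (rule card_mono[OF _ sub]) simp
    then show ?thesis using KN by (simp add: cost_eq)
  qed
  show ?thesis
  proof (cases "?K \<le> N")
    case False
    have "SS = {}" using lower False unfolding SS_def hardI by auto
    then show ?thesis using False oc by (simp add: top_enat_def)
  next
    case True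
    have K1: "1 \<le> ?K" using lb by simp
    have "\<exists>rows. is_CA ?K t P d phi rows"
      unfolding CAN_def using CA_exists[OF S, of t]
      by (rule LeastI_ex[where P="\<lambda>n. \<exists>rows. is_CA n t P d phi rows"])
    then obtain rows where rows: "is_CA ?K t P d phi rows" by blast
    have lenr: "length rows = ?K" using rows unfolding is_CA_def by simp
    define row where "row r = rows ! (min r ?K - 1)" for r
    have rowin: "row r \<in> set rows" for r
      unfolding row_def using lenr K1 by (intro nth_mem) linarith
    have rowtc: "test_case P d phi (row r)" for r
      using rowin[of r] rows unfolding is_CA_def by blast
    have rowcov: "\<exists>r\<in>{1..?K}. covers (row r) \<tau>" if tT: "\<tau> \<in> ?T" for \<tau>
    proof -
      have cv: "\<forall>\<tau>\<in>?T. \<exists>A\<in>set rows. covers A \<tau>" using rows by (simp add: is_CA_def)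
      obtain A where A: "A \<in> set rows" "covers A \<tau>" using bspec[OF cv tT] by blast
      from A(1) obtain k where k0: "k < length rows" "rows ! k = A" by (auto simp: in_set_conv_nth)
      have k: "k < ?K" "rows ! k = A" using k0 lenr by simp_all
      have "row (k + 1) = A" unfolding row_def using k by simp
      moreover have "k + 1 \<in> {1..?K}" using k by simp
      ultimately show ?thesis using A(2) by blast
    qed
    define \<alpha> where "\<alpha> x = (case x of X i p v \<Rightarrow> row i p = v
        | C i \<tau> \<Rightarrow> (\<exists>r\<in>{1..i}. covers (row r) \<tau>) | U i \<Rightarrow> i \<le> ?K)" for x
    have aX: "\<alpha> (X i p v) = (row i p = v)" for i p v by (simp add: \<alpha>_def)
    have aC: "\<alpha> (C i \<tau>) = (\<exists>r\<in>{1..i}. covers (row r) \<tau>)" for i \<tau> by (simp add: \<alpha>_def)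
    have aU: "\<alpha> (U i) = (i \<le> ?K)" for i by (simp add: \<alpha>_def)
    have sat: "peval \<alpha> h" if "h \<in> ?H" for h
      using that unfolding ccx_hard_def
    proof (elim UnE)
      assume "h \<in> {exactly_one {X i p v | v. v \<in> d p} | i p. i \<in> {1..N} \<and> p \<in> P}"
      then obtain i p where h: "h = exactly_one {X i p v | v. v \<in> d p}" "p \<in> P" by blast
      have fin: "finite {X i p v | v. v \<in> d p}"
        using S h(2) unfolding sut_model_def by (simp add: setcompr_eq_image)
      have rd: "row i p \<in> d p" using rowtc[of i] h(2) unfolding test_case_def by auto
      have "\<exists>!a. a \<in> {X i p v | v. v \<in> d p} \<and> \<alpha> a"
        by (rule ex1I[of _ "X i p (row i p)"]) (use rd in \<open>auto simp: aX\<close>)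
      then show "peval \<alpha> h" using h(1) exactly_one_sem[OF fin] by simp
    next
      assume "h \<in> {map_pform (\<lambda>(p, v). X i p v) phi | i. i \<in> {1..N}}"
      then obtain i where h: "h = map_pform (\<lambda>(p, v). X i p v) phi" by blast
      have e: "\<alpha> \<circ> (\<lambda>(p, v). X i p v) = (\<lambda>(p, v). row i p = v)" by (auto simp: aX)
      show "peval \<alpha> h" using rowtc[of i] unfolding h peval_map e test_case_def by blast
    next
      assume "h \<in> {Imp (Atom (C i \<tau>)) (Or (Atom (C (i - 1) \<tau>)) (Atom (X i p v))) | i \<tau> p v.
        i \<in> {1..N} \<and> \<tau> \<in> ?T \<and> (p, v) \<in> \<tau>}"
      then obtain i \<tau> p v where h: "h = Imp (Atom (C i \<tau>)) (Or (Atom (C (i - 1) \<tau>)) (Atom (X i p v)))"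
        "i \<ge> 1" "(p, v) \<in> \<tau>" by auto
      show "peval \<alpha> h"
      proof (cases "\<alpha> (C i \<tau>)")
        case True
        then obtain r where r: "r \<in> {1..i}" "covers (row r) \<tau>" by (auto simp: aC)
        show ?thesis
        proof (cases "r = i")
          case True
          then have "row i p = v" using r(2) h(3) unfolding covers_def by auto
          then show ?thesis using h(1) by (simp add: aX)
        next
          case False
          then have "r \<in> {1..i-1}" using r(1) by auto
          then have "\<alpha> (C (i - 1) \<tau>)" using r(2) by (auto simp: aC)
          then show ?thesis using h(1) by simp
        qed
      next
        case False
        then show ?thesis using h(1) by simp
      qed
    next
      assume "h \<in> {Atom (C N \<tau>) | \<tau>. \<tau> \<in> ?T}"
      then obtain \<tau> where h: "h = Atom (C N \<tau>)" "\<tau> \<in> ?T" by blast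
      obtain r where "r \<in> {1..?K}" "covers (row r) \<tau>" using rowcov[OF h(2)] by blast
      then show "peval \<alpha> h" using h(1) True by (auto simp: aC)
    next
      assume "h \<in> {Imp (Atom (C N \<tau>)) (Neg (Atom (C 0 \<tau>))) | \<tau>. \<tau> \<in> ?T}"
      then obtain \<tau> where h: "h = Imp (Atom (C N \<tau>)) (Neg (Atom (C 0 \<tau>)))" by blast
      then show "peval \<alpha> h" by (simp add: aC)
    next
      assume "h \<in> {Imp (Atom (U (i + 1))) (Atom (U i)) | i. lb + 2 \<le> i \<and> i \<le> N - 1}"
      then obtain i where h: "h = Imp (Atom (U (i + 1))) (Atom (U i))" by blast
      then show "peval \<alpha> h" by (simp add: aU)
    next
      assume "h \<in> {Imp (Neg (Atom (C (i - 1) \<tau>))) (Atom (U i)) | i \<tau>.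
        lb + 2 \<le> i \<and> i \<le> N \<and> \<tau> \<in> ?T}"
      then obtain i \<tau> where h: "h = Imp (Neg (Atom (C (i - 1) \<tau>))) (Atom (U i))" "\<tau> \<in> ?T" by blast
      show "peval \<alpha> h"
      proof (cases "i \<le> ?K")
        case True
        then show ?thesis using h(1) by (simp add: aU)
      next
        case False
        obtain r where r: "r \<in> {1..?K}" "covers (row r) \<tau>" using rowcov[OF h(2)] by blast
        then have "r \<in> {1..i-1}" using False by auto
        then have "\<alpha> (C (i - 1) \<tau>)" using r(2) by (auto simp: aC)
        then show ?thesis using h(1) by simp
      qed
    qed
    have "{i \<in> {lb+2..N}. \<alpha> (U i)} = {lb+2..?K}" using True by (auto simp: aU)
    then have cost: "pmsat_cost ?I \<alpha> = ?K - (lb + 1)" by (simp add: cost_eq)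
    have mem: "enat (?K - (lb + 1)) \<in> SS"
    proof -
      have "\<forall>h\<in>hard ?I. peval \<alpha> h" using sat hardI by simp
      then show ?thesis unfolding SS_def by (intro CollectI exI[of _ \<alpha>]) (simp add: cost)
    qed
    have "Inf SS = enat (?K - (lb + 1))"
    proof (rule antisym)
      show "Inf SS \<le> enat (?K - (lb + 1))" using mem by (rule Inf_lower)
      show "enat (?K - (lb + 1)) \<le> Inf SS"
      proof (rule Inf_greatest)
        fix x assume "x \<in> SS"
        then obtain \<beta> where "x = enat (pmsat_cost ?I \<beta>)" "\<forall>h\<in>?H. peval \<beta> h"
          unfolding SS_def hardI by blast
        then show "enat (?K - (lb + 1)) \<le> x" using lower[of \<beta>] by simp
      qed
    qed
    then show ?thesis using True oc by simp
  qed
qed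

end
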